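(* Let $\mathcal T$ and $\mathcal S$ be triangulated categories and let $T:\mathcal S\to\mathcal T$ be a triangle functor. Suppose $T$ has a left (respectively right) adjoint $S$, and let $\eta:ST\to\mathrm{id}$ be the counit (respectively $\tilde\epsilon:\mathrm{id}\to ST$ the unit) of the adjunction. Then an object $Q$ of $\mathcal S$ is $T$-relative projective (respectively injective) if and only if $\eta_Q$ is a split epimorphism (respectively $\tilde\epsilon_Q$ is a split monomorphism).
   Context: An object $Q$ of $\mathcal S$ is $T$-relative projective if the natural transformation $\mathcal S(Q,-)\to\mathcal T(TQ,T-)$ induced by $T$ is injective, and $T$-relative injective if the natural transformation $\mathcal S(-,Q)\to\mathcal T(T-,TQ)$ induced by $T$ is injective. *)

theory Defs
  imports Main
begin

text \<open>Hom-sets are pairwise disjoint;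
  cmp g f denotes the composite g after f.\<close>

record ('o,'m) tricat =
  Ob :: "'o set"
  Hom :: "'o \<Rightarrow> 'o \<Rightarrow> 'm set"
  cmp :: "'m \<Rightarrow> 'm \<Rightarrow> 'm"
  idm :: "'o \<Rightarrow> 'm"
  madd :: "'m \<Rightarrow> 'm \<Rightarrow> 'm"
  mzero :: "'o \<Rightarrow> 'o \<Rightarrow> 'm"
  mneg :: "'m \<Rightarrow> 'm"
  shO :: "'o \<Rightarrow> 'o"
  shM :: "'m \<Rightarrow> 'm"
  distT :: "('o \<times> 'o \<times> 'o \<times> 'm \<times> 'm \<times> 'm) set"

definition category :: "('o,'m) tricat \<Rightarrow> bool" where
  "category C \<longleftrightarrow>
     (\<forall>X Y. (X \<notin> Ob C \<or> Y \<notin> Ob C) \<longrightarrow> Hom C X Y = {})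
   \<and> (\<forall>X X' Y Y' f. f \<in> Hom C X Y \<and> f \<in> Hom C X' Y' \<longrightarrow> X = X' \<and> Y = Y')
   \<and> (\<forall>X\<in>Ob C. idm C X \<in> Hom C X X)
   \<and> (\<forall>X Y Z f g. f \<in> Hom C X Y \<longrightarrow> g \<in> Hom C Y Z \<longrightarrow> cmp C g f \<in> Hom C X Z)
   \<and> (\<forall>X Y f. f \<in> Hom C X Y \<longrightarrow> cmp C (idm C Y) f = f \<and> cmp C f (idm C X) = f)
   \<and> (\<forall>W X Y Z f g h. f \<in> Hom C W X \<longrightarrow> g \<in> Hom C X Y \<longrightarrow> h \<in> Hom C Y Z \<longrightarrow>
        cmp C h (cmp C g f) = cmp C (cmp C h g) f)"

definition preadditive :: "('o,'m) tricat \<Rightarrow> bool" where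
  "preadditive C \<longleftrightarrow> category C
   \<and> (\<forall>X\<in>Ob C. \<forall>Y\<in>Ob C. mzero C X Y \<in> Hom C X Y)
   \<and> (\<forall>X Y f g. f \<in> Hom C X Y \<longrightarrow> g \<in> Hom C X Y \<longrightarrow> madd C f g \<in> Hom C X Y)
   \<and> (\<forall>X Y f. f \<in> Hom C X Y \<longrightarrow> mneg C f \<in> Hom C X Y)
   \<and> (\<forall>X Y f g h. f \<in> Hom C X Y \<longrightarrow> g \<in> Hom C X Y \<longrightarrow> h \<in> Hom C X Y \<longrightarrow>
        madd C (madd C f g) h = madd C f (madd C g h)
      \<and> madd C f g = madd C g f
      \<and> madd C f (mzero C X Y) = f
      \<and> madd C f (mneg C f) = mzero C X Y)
   \<and> (\<forall>X Y Z f f' g. f \<in> Hom C X Y \<longrightarrow> f' \<in> Hom C X Y \<longrightarrow> g \<in> Hom C Y Z \<longrightarrow>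
        cmp C g (madd C f f') = madd C (cmp C g f) (cmp C g f'))
   \<and> (\<forall>X Y Z f g g'. f \<in> Hom C X Y \<longrightarrow> g \<in> Hom C Y Z \<longrightarrow> g' \<in> Hom C Y Z \<longrightarrow>
        cmp C (madd C g g') f = madd C (cmp C g f) (cmp C g' f))"

definition is_zero_obj :: "('o,'m) tricat \<Rightarrow> 'o \<Rightarrow> bool" where
  "is_zero_obj C Z \<longleftrightarrow> Z \<in> Ob C \<and> idm C Z = mzero C Z Z"

definition additive :: "('o,'m) tricat \<Rightarrow> bool" where
  "additive C \<longleftrightarrow> preadditive C
   \<and> (\<exists>Z. is_zero_obj C Z)
   \<and> (\<forall>X\<in>Ob C. \<forall>Y\<in>Ob C. \<exists>P i1 i2 p1 p2. P \<in> Ob C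
        \<and> i1 \<in> Hom C X P \<and> i2 \<in> Hom C Y P \<and> p1 \<in> Hom C P X \<and> p2 \<in> Hom C P Y
        \<and> cmp C p1 i1 = idm C X \<and> cmp C p2 i2 = idm C Y
        \<and> cmp C p2 i1 = mzero C X Y \<and> cmp C p1 i2 = mzero C Y X
        \<and> madd C (cmp C i1 p1) (cmp C i2 p2) = idm C P)"

definition is_functor :: "('o,'m) tricat \<Rightarrow> ('p,'n) tricat \<Rightarrow> ('o \<Rightarrow> 'p) \<Rightarrow> ('m \<Rightarrow> 'n) \<Rightarrow> bool" where
  "is_functor C D Fo Fm \<longleftrightarrow>
     (\<forall>X\<in>Ob C. Fo X \<in> Ob D)
   \<and> (\<forall>X Y f. f \<in> Hom C X Y \<longrightarrow> Fm f \<in> Hom D (Fo X) (Fo Y))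
   \<and> (\<forall>X\<in>Ob C. Fm (idm C X) = idm D (Fo X))
   \<and> (\<forall>X Y Z f g. f \<in> Hom C X Y \<longrightarrow> g \<in> Hom C Y Z \<longrightarrow> Fm (cmp C g f) = cmp D (Fm g) (Fm f))"

definition additive_functor :: "('o,'m) tricat \<Rightarrow> ('p,'n) tricat \<Rightarrow> ('o \<Rightarrow> 'p) \<Rightarrow> ('m \<Rightarrow> 'n) \<Rightarrow> bool" where
  "additive_functor C D Fo Fm \<longleftrightarrow> is_functor C D Fo Fm
   \<and> (\<forall>X Y f g. f \<in> Hom C X Y \<longrightarrow> g \<in> Hom C X Y \<longrightarrow> Fm (madd C f g) = madd D (Fm f) (Fm g))"

definition isomorphism :: "('o,'m) tricat \<Rightarrow> 'o \<Rightarrow> 'o \<Rightarrow> 'm \<Rightarrow> bool" where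
  "isomorphism C X Y f \<longleftrightarrow> f \<in> Hom C X Y \<and> (\<exists>g\<in>Hom C Y X. cmp C g f = idm C X \<and> cmp C f g = idm C Y)"

definition split_epi :: "('o,'m) tricat \<Rightarrow> 'o \<Rightarrow> 'o \<Rightarrow> 'm \<Rightarrow> bool" where
  "split_epi C X Y f \<longleftrightarrow> f \<in> Hom C X Y \<and> (\<exists>s\<in>Hom C Y X. cmp C f s = idm C Y)"

definition split_mono :: "('o,'m) tricat \<Rightarrow> 'o \<Rightarrow> 'o \<Rightarrow> 'm \<Rightarrow> bool" where
  "split_mono C X Y f \<longleftrightarrow> f \<in> Hom C X Y \<and> (\<exists>r\<in>Hom C Y X. cmp C r f = idm C X)"

definition nat_trans :: "('o,'m) tricat \<Rightarrow> ('p,'n) tricat \<Rightarrow> ('o \<Rightarrow> 'p) \<Rightarrow> ('m \<Rightarrow> 'n)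
    \<Rightarrow> ('o \<Rightarrow> 'p) \<Rightarrow> ('m \<Rightarrow> 'n) \<Rightarrow> ('o \<Rightarrow> 'n) \<Rightarrow> bool" where
  "nat_trans C D Fo Fm Go Gm \<tau> \<longleftrightarrow>
     (\<forall>X\<in>Ob C. \<tau> X \<in> Hom D (Fo X) (Go X))
   \<and> (\<forall>X Y f. f \<in> Hom C X Y \<longrightarrow> cmp D (\<tau> Y) (Fm f) = cmp D (Gm f) (\<tau> X))"

definition nat_iso :: "('o,'m) tricat \<Rightarrow> ('p,'n) tricat \<Rightarrow> ('o \<Rightarrow> 'p) \<Rightarrow> ('m \<Rightarrow> 'n)
    \<Rightarrow> ('o \<Rightarrow> 'p) \<Rightarrow> ('m \<Rightarrow> 'n) \<Rightarrow> ('o \<Rightarrow> 'n) \<Rightarrow> bool" where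
  "nat_iso C D Fo Fm Go Gm \<tau> \<longleftrightarrow> nat_trans C D Fo Fm Go Gm \<tau>
   \<and> (\<forall>X\<in>Ob C. isomorphism D (Fo X) (Go X) (\<tau> X))"

definition shift_autoequiv :: "('o,'m) tricat \<Rightarrow> bool" where
  "shift_autoequiv C \<longleftrightarrow> additive_functor C C (shO C) (shM C)
   \<and> (\<forall>X\<in>Ob C. \<forall>Y\<in>Ob C. bij_betw (shM C) (Hom C X Y) (Hom C (shO C X) (shO C Y)))
   \<and> (\<forall>Y\<in>Ob C. \<exists>X\<in>Ob C. \<exists>f. isomorphism C (shO C X) Y f)"

definition is_triangle :: "('o,'m) tricat \<Rightarrow> 'o \<times> 'o \<times> 'o \<times> 'm \<times> 'm \<times> 'm \<Rightarrow> bool" where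
  "is_triangle C t = (case t of (X,Y,Z,u,v,w) \<Rightarrow>
     u \<in> Hom C X Y \<and> v \<in> Hom C Y Z \<and> w \<in> Hom C Z (shO C X))"

definition tri_morph :: "('o,'m) tricat \<Rightarrow> 'o \<times> 'o \<times> 'o \<times> 'm \<times> 'm \<times> 'm
    \<Rightarrow> 'o \<times> 'o \<times> 'o \<times> 'm \<times> 'm \<times> 'm \<Rightarrow> 'm \<Rightarrow> 'm \<Rightarrow> 'm \<Rightarrow> bool" where
  "tri_morph C t t' a b c = (case t of (X,Y,Z,u,v,w) \<Rightarrow> case t' of (X',Y',Z',u',v',w') \<Rightarrow>
     a \<in> Hom C X X' \<and> b \<in> Hom C Y Y' \<and> c \<in> Hom C Z Z'
   \<and> cmp C b u = cmp C u' a \<and> cmp C c v = cmp C v' b \<and> cmp C (shM C a) w = cmp C w' c)"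

definition tri_iso :: "('o,'m) tricat \<Rightarrow> 'o \<times> 'o \<times> 'o \<times> 'm \<times> 'm \<times> 'm
    \<Rightarrow> 'o \<times> 'o \<times> 'o \<times> 'm \<times> 'm \<times> 'm \<Rightarrow> 'm \<Rightarrow> 'm \<Rightarrow> 'm \<Rightarrow> bool" where
  "tri_iso C t t' a b c = (tri_morph C t t' a b c \<and>
     (case t of (X,Y,Z,u,v,w) \<Rightarrow> case t' of (X',Y',Z',u',v',w') \<Rightarrow>
       isomorphism C X X' a \<and> isomorphism C Y Y' b \<and> isomorphism C Z Z' c))"

text \<open>Triangulated category: axioms TR1--TR4 (octahedral axiom in the form of the Stacks project).\<close>
definition triangulated :: "('o,'m) tricat \<Rightarrow> bool" where
  "triangulated C \<longleftrightarrow> additive C \<and> shift_autoequiv C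
   \<and> distT C \<subseteq> {t. is_triangle C t}
   \<and> (\<forall>X\<in>Ob C. \<forall>Z. is_zero_obj C Z \<longrightarrow>
        (X, X, Z, idm C X, mzero C X Z, mzero C Z (shO C X)) \<in> distT C)
   \<and> (\<forall>t t' a b c. t \<in> distT C \<longrightarrow> is_triangle C t' \<longrightarrow> tri_iso C t t' a b c \<longrightarrow> t' \<in> distT C)
   \<and> (\<forall>X Y u. u \<in> Hom C X Y \<longrightarrow> (\<exists>Z v w. (X,Y,Z,u,v,w) \<in> distT C))
   \<and> (\<forall>X Y Z u v w. is_triangle C (X,Y,Z,u,v,w) \<longrightarrow>
        ((X,Y,Z,u,v,w) \<in> distT C \<longleftrightarrow> (Y, Z, shO C X, v, w, mneg C (shM C u)) \<in> distT C))
   \<and> (\<forall>X Y Z u v w X' Y' Z' u' v' w' a b.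
        (X,Y,Z,u,v,w) \<in> distT C \<longrightarrow> (X',Y',Z',u',v',w') \<in> distT C \<longrightarrow>
        a \<in> Hom C X X' \<longrightarrow> b \<in> Hom C Y Y' \<longrightarrow> cmp C b u = cmp C u' a \<longrightarrow>
        (\<exists>c. tri_morph C (X,Y,Z,u,v,w) (X',Y',Z',u',v',w') a b c))
   \<and> (\<forall>X Y Z f g Q1 p1 d1 Q2 p2 d2 Q3 p3 d3.
        (X,Y,Q1,f,p1,d1) \<in> distT C \<longrightarrow> (X,Z,Q2,cmp C g f,p2,d2) \<in> distT C \<longrightarrow>
        (Y,Z,Q3,g,p3,d3) \<in> distT C \<longrightarrow>
        (\<exists>a b. (Q1,Q2,Q3,a,b,cmp C (shM C p1) d3) \<in> distT C
           \<and> tri_morph C (X,Y,Q1,f,p1,d1) (X,Z,Q2,cmp C g f,p2,d2) (idm C X) g a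
           \<and> tri_morph C (X,Z,Q2,cmp C g f,p2,d2) (Y,Z,Q3,g,p3,d3) f (idm C Z) b))"

definition triangle_functor :: "('o,'m) tricat \<Rightarrow> ('p,'n) tricat \<Rightarrow> ('o \<Rightarrow> 'p) \<Rightarrow> ('m \<Rightarrow> 'n)
    \<Rightarrow> ('o \<Rightarrow> 'n) \<Rightarrow> bool" where
  "triangle_functor C D Fo Fm \<phi> \<longleftrightarrow> additive_functor C D Fo Fm
   \<and> nat_iso C D (Fo \<circ> shO C) (Fm \<circ> shM C) (shO D \<circ> Fo) (shM D \<circ> Fm) \<phi>
   \<and> (\<forall>X Y Z u v w. (X,Y,Z,u,v,w) \<in> distT C \<longrightarrow>
        (Fo X, Fo Y, Fo Z, Fm u, Fm v, cmp D (\<phi> X) (Fm w)) \<in> distT D)"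

definition adjunction :: "('o,'m) tricat \<Rightarrow> ('p,'n) tricat \<Rightarrow> ('o \<Rightarrow> 'p) \<Rightarrow> ('m \<Rightarrow> 'n)
    \<Rightarrow> ('p \<Rightarrow> 'o) \<Rightarrow> ('n \<Rightarrow> 'm) \<Rightarrow> ('o \<Rightarrow> 'm) \<Rightarrow> ('p \<Rightarrow> 'n) \<Rightarrow> bool" where
  "adjunction C D Fo Fm Go Gm unit counit \<longleftrightarrow> is_functor C D Fo Fm \<and> is_functor D C Go Gm
   \<and> nat_trans C C id id (Go \<circ> Fo) (Gm \<circ> Fm) unit
   \<and> nat_trans D D (Fo \<circ> Go) (Fm \<circ> Gm) id id counit
   \<and> (\<forall>X\<in>Ob C. cmp D (counit (Fo X)) (Fm (unit X)) = idm D (Fo X))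
   \<and> (\<forall>Y\<in>Ob D. cmp C (Gm (counit Y)) (unit (Go Y)) = idm C (Go Y))"

definition rel_projective :: "('o,'m) tricat \<Rightarrow> ('m \<Rightarrow> 'n) \<Rightarrow> 'o \<Rightarrow> bool" where
  "rel_projective S Tm Q \<longleftrightarrow> (\<forall>X\<in>Ob S. inj_on Tm (Hom S Q X))"

definition rel_injective :: "('o,'m) tricat \<Rightarrow> ('m \<Rightarrow> 'n) \<Rightarrow> 'o \<Rightarrow> bool" where
  "rel_injective S Tm Q \<longleftrightarrow> (\<forall>X\<in>Ob S. inj_on Tm (Hom S X Q))"

end

theory Submission
  imports Defs
begin


lemma cat_hom_ob1: assumes "category C" "f \<in> Hom C X Y" shows "X \<in> Ob C"
  using assms unfolding category_def by auto
lemma cat_hom_ob2: assumes "category C" "f \<in> Hom C X Y" shows "Y \<in> Ob C"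
  using assms unfolding category_def by auto
lemmas cat_hom_ob = cat_hom_ob1 cat_hom_ob2

lemma cat_id: "category C \<Longrightarrow> X \<in> Ob C \<Longrightarrow> idm C X \<in> Hom C X X"
  unfolding category_def by auto
lemma cat_cmp: "category C \<Longrightarrow> f \<in> Hom C X Y \<Longrightarrow> g \<in> Hom C Y Z \<Longrightarrow> cmp C g f \<in> Hom C X Z"
  unfolding category_def by auto
lemma cat_idl: "category C \<Longrightarrow> f \<in> Hom C X Y \<Longrightarrow> cmp C (idm C Y) f = f"
  unfolding category_def by auto
lemma cat_idr: "category C \<Longrightarrow> f \<in> Hom C X Y \<Longrightarrow> cmp C f (idm C X) = f"
  unfolding category_def by auto
lemma cat_assoc: "category C \<Longrightarrow> f \<in> Hom C W X \<Longrightarrow> g \<in> Hom C X Y \<Longrightarrow> h \<in> Hom C Y Z \<Longrightarrow>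
        cmp C h (cmp C g f) = cmp C (cmp C h g) f"
  unfolding category_def by auto

lemma pa_cat: "preadditive C \<Longrightarrow> category C" unfolding preadditive_def by auto
lemma pa_zero: "preadditive C \<Longrightarrow> X \<in> Ob C \<Longrightarrow> Y \<in> Ob C \<Longrightarrow> mzero C X Y \<in> Hom C X Y"
  unfolding preadditive_def by auto
lemma pa_add: "preadditive C \<Longrightarrow> f \<in> Hom C X Y \<Longrightarrow> g \<in> Hom C X Y \<Longrightarrow> madd C f g \<in> Hom C X Y"
  unfolding preadditive_def by auto
lemma pa_neg: "preadditive C \<Longrightarrow> f \<in> Hom C X Y \<Longrightarrow> mneg C f \<in> Hom C X Y"
  unfolding preadditive_def by auto
lemma pa_ax: assumes "preadditive C" "f \<in> Hom C X Y" "g \<in> Hom C X Y" "h \<in> Hom C X Y"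
  shows "madd C (madd C f g) h = madd C f (madd C g h)"
      "madd C f g = madd C g f"
      "madd C f (mzero C X Y) = f"
      "madd C f (mneg C f) = mzero C X Y"
  using assms unfolding preadditive_def by auto
lemma pa_distl: "preadditive C \<Longrightarrow> f \<in> Hom C X Y \<Longrightarrow> f' \<in> Hom C X Y \<Longrightarrow> g \<in> Hom C Y Z \<Longrightarrow>
        cmp C g (madd C f f') = madd C (cmp C g f) (cmp C g f')"
  unfolding preadditive_def by auto
lemma pa_distr: "preadditive C \<Longrightarrow> f \<in> Hom C X Y \<Longrightarrow> g \<in> Hom C Y Z \<Longrightarrow> g' \<in> Hom C Y Z \<Longrightarrow>
        cmp C (madd C g g') f = madd C (cmp C g f) (cmp C g' f)"
  unfolding preadditive_def by auto

lemma pa_idem_zero: assumes C: "preadditive C" and x: "x \<in> Hom C X Y" and e: "x = madd C x x"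
  shows "x = mzero C X Y"
proof -
  have n: "mneg C x \<in> Hom C X Y" using pa_neg[OF C x] .
  have "madd C (madd C x x) (mneg C x) = madd C x (madd C x (mneg C x))"
    using pa_ax(1)[OF C x x n] .
  also have "\<dots> = madd C x (mzero C X Y)" using pa_ax(4)[OF C x x x] by simp
  also have "\<dots> = x" using pa_ax(3)[OF C x x x] .
  finally have "madd C (madd C x x) (mneg C x) = x" .
  moreover have "madd C x (mneg C x) = mzero C X Y" using pa_ax(4)[OF C x x x] .
  ultimately show ?thesis using e by simp
qed

lemma zero_cmp: assumes C: "preadditive C" and f: "f \<in> Hom C X Y" and Z: "Z \<in> Ob C"
  shows "cmp C (mzero C Y Z) f = mzero C X Z"
proof -
  have cat: "category C" using pa_cat[OF C] .
  have Y: "Y \<in> Ob C" using cat_hom_ob[OF cat f] by simp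
  have X: "X \<in> Ob C" using cat_hom_ob[OF cat f] by simp
  have z: "mzero C Y Z \<in> Hom C Y Z" using pa_zero[OF C Y Z] .
  have zz: "madd C (mzero C Y Z) (mzero C Y Z) = mzero C Y Z" using pa_ax(3)[OF C z z z] .
  have h: "cmp C (mzero C Y Z) f \<in> Hom C X Z" using cat_cmp[OF cat f z] .
  have "cmp C (mzero C Y Z) f = madd C (cmp C (mzero C Y Z) f) (cmp C (mzero C Y Z) f)"
    using pa_distr[OF C f z z] zz by simp
  then show ?thesis using pa_idem_zero[OF C h] by simp
qed

lemma cmp_zero: assumes C: "preadditive C" and g: "g \<in> Hom C Y Z" and W: "W \<in> Ob C"
  shows "cmp C g (mzero C W Y) = mzero C W Z"
proof -
  have cat: "category C" using pa_cat[OF C] .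
  have Y: "Y \<in> Ob C" using cat_hom_ob[OF cat g] by simp
  have z: "mzero C W Y \<in> Hom C W Y" using pa_zero[OF C W Y] .
  have zz: "madd C (mzero C W Y) (mzero C W Y) = mzero C W Y" using pa_ax(3)[OF C z z z] .
  have h: "cmp C g (mzero C W Y) \<in> Hom C W Z" using cat_cmp[OF cat z g] .
  have "cmp C g (mzero C W Y) = madd C (cmp C g (mzero C W Y)) (cmp C g (mzero C W Y))"
    using pa_distl[OF C z z g] zz by simp
  then show ?thesis using pa_idem_zero[OF C h] by simp
qed

lemma neg_unique: assumes C: "preadditive C" and a: "a \<in> Hom C X Y" and b: "b \<in> Hom C X Y"
  and s: "madd C a b = mzero C X Y" shows "b = mneg C a"
proof -
  have n: "mneg C a \<in> Hom C X Y" using pa_neg[OF C a] .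
  have "b = madd C b (mzero C X Y)" using pa_ax(3)[OF C b b b] by simp
  also have "\<dots> = madd C b (madd C a (mneg C a))" using pa_ax(4)[OF C a a a] by simp
  also have "\<dots> = madd C (madd C b a) (mneg C a)" using pa_ax(1)[OF C b a n] by simp
  also have "\<dots> = madd C (mzero C X Y) (mneg C a)" using pa_ax(2)[OF C a b b] s by simp
  also have "\<dots> = mneg C a"
  proof -
    have Z: "mzero C X Y \<in> Hom C X Y" using pa_zero[OF C] cat_hom_ob[OF pa_cat[OF C] a] by blast
    show ?thesis using pa_ax(2)[OF C Z n n] pa_ax(3)[OF C n n n] by simp
  qed
  finally show ?thesis .
qed

lemma neg_neg: assumes C: "preadditive C" and a: "a \<in> Hom C X Y" shows "mneg C (mneg C a) = a"
proof -
  have n: "mneg C a \<in> Hom C X Y" using pa_neg[OF C a] .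
  have "madd C (mneg C a) a = mzero C X Y" using pa_ax(2)[OF C a n n] pa_ax(4)[OF C a a a] by simp
  then show ?thesis using neg_unique[OF C n a] by simp
qed

lemma cmp_neg: assumes C: "preadditive C" and f: "f \<in> Hom C X Y" and g: "g \<in> Hom C Y Z"
  shows "cmp C g (mneg C f) = mneg C (cmp C g f)"
proof -
  have cat: "category C" using pa_cat[OF C] .
  have X: "X \<in> Ob C" using cat_hom_ob[OF cat f] by simp
  have n: "mneg C f \<in> Hom C X Y" using pa_neg[OF C f] .
  have "madd C (cmp C g f) (cmp C g (mneg C f)) = cmp C g (madd C f (mneg C f))"
    using pa_distl[OF C f n g] by simp
  also have "\<dots> = mzero C X Z" using pa_ax(4)[OF C f f f] cmp_zero[OF C g X] by simp
  finally show ?thesis using neg_unique[OF C cat_cmp[OF cat f g] cat_cmp[OF cat n g]] by simp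
qed

lemma neg_cmp: assumes C: "preadditive C" and f: "f \<in> Hom C X Y" and g: "g \<in> Hom C Y Z"
  shows "cmp C (mneg C g) f = mneg C (cmp C g f)"
proof -
  have cat: "category C" using pa_cat[OF C] .
  have Z: "Z \<in> Ob C" using cat_hom_ob[OF cat g] by simp
  have n: "mneg C g \<in> Hom C Y Z" using pa_neg[OF C g] .
  have "madd C (cmp C g f) (cmp C (mneg C g) f) = cmp C (madd C g (mneg C g)) f"
    using pa_distr[OF C f g n] by simp
  also have "\<dots> = mzero C X Z" using pa_ax(4)[OF C g g g] zero_cmp[OF C f Z] by simp
  finally show ?thesis using neg_unique[OF C cat_cmp[OF cat f g] cat_cmp[OF cat f n]] by simp
qed

lemma func_zero: assumes C: "preadditive C" and D: "preadditive D"
  and F: "additive_functor C D Fo Fm" and X: "X \<in> Ob C" and Y: "Y \<in> Ob C"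
  shows "Fm (mzero C X Y) = mzero D (Fo X) (Fo Y)"
proof -
  have z: "mzero C X Y \<in> Hom C X Y" using pa_zero[OF C X Y] .
  have h: "Fm (mzero C X Y) \<in> Hom D (Fo X) (Fo Y)" using F z unfolding additive_functor_def is_functor_def by blast
  have "Fm (mzero C X Y) = Fm (madd C (mzero C X Y) (mzero C X Y))" using pa_ax(3)[OF C z z z] by simp
  also have "\<dots> = madd D (Fm (mzero C X Y)) (Fm (mzero C X Y))" using F z unfolding additive_functor_def by blast
  finally show ?thesis using pa_idem_zero[OF D h] by simp
qed


lemma tr_pa: "triangulated C \<Longrightarrow> preadditive C"
  unfolding triangulated_def additive_def by auto
lemma tr_zobj: "triangulated C \<Longrightarrow> \<exists>Z. is_zero_obj C Z"
  unfolding triangulated_def additive_def by auto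
lemma tr_shF: "triangulated C \<Longrightarrow> additive_functor C C (shO C) (shM C)"
  unfolding triangulated_def shift_autoequiv_def by auto
lemma tr_shbij: "triangulated C \<Longrightarrow> X \<in> Ob C \<Longrightarrow> Y \<in> Ob C \<Longrightarrow> bij_betw (shM C) (Hom C X Y) (Hom C (shO C X) (shO C Y))"
  unfolding triangulated_def shift_autoequiv_def by auto
lemma tr_shess: "triangulated C \<Longrightarrow> Y \<in> Ob C \<Longrightarrow> \<exists>X\<in>Ob C. \<exists>f. isomorphism C (shO C X) Y f"
  unfolding triangulated_def shift_autoequiv_def by auto
lemma tr_tri: "triangulated C \<Longrightarrow> t \<in> distT C \<Longrightarrow> is_triangle C t"
  unfolding triangulated_def by auto
lemma tr_triv: "triangulated C \<Longrightarrow> X \<in> Ob C \<Longrightarrow> is_zero_obj C Z \<Longrightarrow>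
        (X, X, Z, idm C X, mzero C X Z, mzero C Z (shO C X)) \<in> distT C"
  unfolding triangulated_def by auto
lemma tr_TR1: "triangulated C \<Longrightarrow> u \<in> Hom C X Y \<Longrightarrow> \<exists>Z v w. (X,Y,Z,u,v,w) \<in> distT C"
  unfolding triangulated_def by auto
lemma tr_rot: assumes "triangulated C" "(X,Y,Z,u,v,w) \<in> distT C"
  shows "(Y, Z, shO C X, v, w, mneg C (shM C u)) \<in> distT C"
proof -
  have "is_triangle C (X,Y,Z,u,v,w)" using tr_tri assms by blast
  then show ?thesis using assms unfolding triangulated_def by auto
qed
lemma tr_TR3: "triangulated C \<Longrightarrow> (X,Y,Z,u,v,w) \<in> distT C \<Longrightarrow> (X',Y',Z',u',v',w') \<in> distT C \<Longrightarrow>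
        a \<in> Hom C X X' \<Longrightarrow> b \<in> Hom C Y Y' \<Longrightarrow> cmp C b u = cmp C u' a \<Longrightarrow>
        (\<exists>c. tri_morph C (X,Y,Z,u,v,w) (X',Y',Z',u',v',w') a b c)"
  unfolding triangulated_def by auto

lemma tri_homs: "triangulated C \<Longrightarrow> (X,Y,Z,u,v,w) \<in> distT C \<Longrightarrow>
   u \<in> Hom C X Y \<and> v \<in> Hom C Y Z \<and> w \<in> Hom C Z (shO C X)"
  using tr_tri[of C "(X,Y,Z,u,v,w)"] unfolding is_triangle_def by simp

lemma sh_hom: "triangulated C \<Longrightarrow> f \<in> Hom C X Y \<Longrightarrow> shM C f \<in> Hom C (shO C X) (shO C Y)"
  using tr_shF unfolding additive_functor_def is_functor_def by blast
lemma sh_ob: "triangulated C \<Longrightarrow> X \<in> Ob C \<Longrightarrow> shO C X \<in> Ob C"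
  using tr_shF unfolding additive_functor_def is_functor_def by blast
lemma sh_id: "triangulated C \<Longrightarrow> X \<in> Ob C \<Longrightarrow> shM C (idm C X) = idm C (shO C X)"
  using tr_shF unfolding additive_functor_def is_functor_def by blast
lemma sh_cmp: "triangulated C \<Longrightarrow> f \<in> Hom C X Y \<Longrightarrow> g \<in> Hom C Y Z \<Longrightarrow> shM C (cmp C g f) = cmp C (shM C g) (shM C f)"
  using tr_shF unfolding additive_functor_def is_functor_def by blast

lemma zobj_ob: "is_zero_obj C Z \<Longrightarrow> Z \<in> Ob C" unfolding is_zero_obj_def by simp

lemma dist_comp_zero: assumes C: "triangulated C" and d: "(X,Y,W,u,v,w) \<in> distT C"
  shows "cmp C v u = mzero C X W"
proof -
  have pa: "preadditive C" using tr_pa[OF C] .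
  have cat: "category C" using pa_cat[OF pa] .
  obtain Z where Z: "is_zero_obj C Z" using tr_zobj[OF C] by blast
  have h: "u \<in> Hom C X Y" "v \<in> Hom C Y W" using tri_homs[OF C d] by auto
  have X: "X \<in> Ob C" using cat_hom_ob[OF cat h(1)] by simp
  have t: "(X, X, Z, idm C X, mzero C X Z, mzero C Z (shO C X)) \<in> distT C" using tr_triv[OF C X Z] .
  have "cmp C u (idm C X) = cmp C u (idm C X)" ..
  then obtain c where c: "tri_morph C (X, X, Z, idm C X, mzero C X Z, mzero C Z (shO C X)) (X,Y,W,u,v,w) (idm C X) u c"
    using tr_TR3[OF C t d cat_id[OF cat X] h(1)] by blast
  then have "c \<in> Hom C Z W" "cmp C c (mzero C X Z) = cmp C v u" unfolding tri_morph_def by auto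
  then show ?thesis using cmp_zero[OF pa _ X] by metis
qed

lemma split_epi_of_zero: assumes C: "triangulated C" and d: "(X,Y,W,u,v,w) \<in> distT C"
  and v0: "v = mzero C Y W"
  shows "\<exists>s\<in>Hom C Y X. cmp C u s = idm C Y"
proof -
  have pa: "preadditive C" using tr_pa[OF C] .
  have cat: "category C" using pa_cat[OF pa] .
  obtain Z where Z: "is_zero_obj C Z" using tr_zobj[OF C] by blast
  have Zo: "Z \<in> Ob C" using zobj_ob[OF Z] .
  have h: "u \<in> Hom C X Y" "v \<in> Hom C Y W" "w \<in> Hom C W (shO C X)" using tri_homs[OF C d] by auto
  have X: "X \<in> Ob C" and Y: "Y \<in> Ob C" and Wo: "W \<in> Ob C" using cat_hom_ob[OF cat h(1)] cat_hom_ob[OF cat h(2)] by auto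
  have t: "(Y, Z, shO C Y, mzero C Y Z, mzero C Z (shO C Y), mneg C (shM C (idm C Y))) \<in> distT C"
    using tr_rot[OF C tr_triv[OF C Y Z]] .
  have r: "(Y, W, shO C X, v, w, mneg C (shM C u)) \<in> distT C" using tr_rot[OF C d] .
  have b: "mzero C Z W \<in> Hom C Z W" using pa_zero[OF pa Zo Wo] .
  have "cmp C (mzero C Z W) (mzero C Y Z) = cmp C v (idm C Y)"
    using zero_cmp[OF pa pa_zero[OF pa Y Zo] Wo] cat_idr[OF cat h(2)] v0 by simp
  then obtain c where c: "tri_morph C (Y, Z, shO C Y, mzero C Y Z, mzero C Z (shO C Y), mneg C (shM C (idm C Y)))
      (Y, W, shO C X, v, w, mneg C (shM C u)) (idm C Y) (mzero C Z W) c"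
    using tr_TR3[OF C t r cat_id[OF cat Y] b] by blast
  then have c1: "c \<in> Hom C (shO C Y) (shO C X)"
    and c2: "cmp C (shM C (idm C Y)) (mneg C (shM C (idm C Y))) = cmp C (mneg C (shM C u)) c"
    unfolding tri_morph_def by auto
  have SY: "shO C Y \<in> Ob C" using sh_ob[OF C Y] .
  have iY: "idm C (shO C Y) \<in> Hom C (shO C Y) (shO C Y)" using cat_id[OF cat SY] .
  have su: "shM C u \<in> Hom C (shO C X) (shO C Y)" using sh_hom[OF C h(1)] .
  have "cmp C (shM C (idm C Y)) (mneg C (shM C (idm C Y))) = mneg C (idm C (shO C Y))"
    using sh_id[OF C Y] cat_idl[OF cat pa_neg[OF pa iY]] by simp
  moreover have "cmp C (mneg C (shM C u)) c = mneg C (cmp C (shM C u) c)"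
    using neg_cmp[OF pa c1 su] .
  ultimately have "mneg C (idm C (shO C Y)) = mneg C (cmp C (shM C u) c)" using c2 by simp
  then have e: "idm C (shO C Y) = cmp C (shM C u) c"
    using neg_neg[OF pa iY] neg_neg[OF pa cat_cmp[OF cat c1 su]] by metis
  obtain s where s: "s \<in> Hom C Y X" "c = shM C s"
    using tr_shbij[OF C Y X] c1 unfolding bij_betw_def by blast
  have "shM C (cmp C u s) = shM C (idm C Y)"
    using sh_cmp[OF C s(1) h(1)] s(2) e sh_id[OF C Y] by simp
  moreover have "cmp C u s \<in> Hom C Y Y" using cat_cmp[OF cat s(1) h(1)] .
  ultimately have "cmp C u s = idm C Y"
    using inj_onD[OF bij_betw_imp_inj_on[OF tr_shbij[OF C Y Y]] _ _ cat_id[OF cat Y]] by blast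
  then show ?thesis using s(1) by blast
qed


lemma neg_zero: assumes pa: "preadditive C" "X \<in> Ob C" "Y \<in> Ob C"
  shows "mneg C (mzero C X Y) = mzero C X Y"
proof -
  have z: "mzero C X Y \<in> Hom C X Y" using pa_zero[OF pa] .
  show ?thesis using neg_unique[OF pa(1) z z] pa_ax(3)[OF pa(1) z z z] by simp
qed

lemma w_zero_of_mono: assumes C: "triangulated C" and d: "(X,Y,W,u,v,w) \<in> distT C"
  and mono: "\<forall>V\<in>Ob C. \<forall>f\<in>Hom C V X. \<forall>g\<in>Hom C V X. cmp C u f = cmp C u g \<longrightarrow> f = g"
  shows "w = mzero C W (shO C X)"
proof -
  have pa: "preadditive C" using tr_pa[OF C] .
  have cat: "category C" using pa_cat[OF pa] .
  have h: "u \<in> Hom C X Y" "v \<in> Hom C Y W" "w \<in> Hom C W (shO C X)" using tri_homs[OF C d] by auto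
  have X: "X \<in> Ob C" and Y: "Y \<in> Ob C" and Wo: "W \<in> Ob C" using cat_hom_ob[OF cat h(1)] cat_hom_ob[OF cat h(2)] by auto
  have SX: "shO C X \<in> Ob C" and SY: "shO C Y \<in> Ob C" using sh_ob[OF C X] sh_ob[OF C Y] by auto
  have r2: "(W, shO C X, shO C Y, w, mneg C (shM C u), mneg C (shM C v)) \<in> distT C"
    using tr_rot[OF C tr_rot[OF C d]] .
  have su: "shM C u \<in> Hom C (shO C X) (shO C Y)" using sh_hom[OF C h(1)] .
  have "cmp C (mneg C (shM C u)) w = mzero C W (shO C Y)" using dist_comp_zero[OF C r2] .
  then have "mneg C (cmp C (shM C u) w) = mzero C W (shO C Y)" using neg_cmp[OF pa h(3) su] by simp
  then have uw: "cmp C (shM C u) w = mzero C W (shO C Y)"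
    using neg_neg[OF pa cat_cmp[OF cat h(3) su]] neg_zero[OF pa Wo SY] by simp
  obtain C' \<phi> where C': "C' \<in> Ob C" and phi: "isomorphism C (shO C C') W \<phi>" using tr_shess[OF C Wo] by blast
  obtain \<psi> where phi1: "\<phi> \<in> Hom C (shO C C') W" and psi: "\<psi> \<in> Hom C W (shO C C')"
    and pp: "cmp C \<phi> \<psi> = idm C W" using phi unfolding isomorphism_def by blast
  have SC: "shO C C' \<in> Ob C" using sh_ob[OF C C'] .
  have wp: "cmp C w \<phi> \<in> Hom C (shO C C') (shO C X)" using cat_cmp[OF cat phi1 h(3)] .
  obtain k where k: "k \<in> Hom C C' X" "cmp C w \<phi> = shM C k"
    using tr_shbij[OF C C' X] wp unfolding bij_betw_def by blast
  have "shM C (cmp C u k) = cmp C (shM C u) (cmp C w \<phi>)" using sh_cmp[OF C k(1) h(1)] k(2) by simp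
  also have "\<dots> = cmp C (mzero C W (shO C Y)) \<phi>" using cat_assoc[OF cat phi1 h(3) su] uw by simp
  also have "\<dots> = mzero C (shO C C') (shO C Y)" using zero_cmp[OF pa phi1 SY] .
  also have "\<dots> = shM C (mzero C C' Y)" using func_zero[OF pa pa tr_shF[OF C] C' Y] by simp
  finally have eq: "shM C (cmp C u k) = shM C (mzero C C' Y)" .
  have "cmp C u k = mzero C C' Y"
    using inj_onD[OF bij_betw_imp_inj_on[OF tr_shbij[OF C C' Y]] eq cat_cmp[OF cat k(1) h(1)] pa_zero[OF pa C' Y]] .
  also have "\<dots> = cmp C u (mzero C C' X)" using cmp_zero[OF pa h(1) C'] by simp
  finally have "cmp C u k = cmp C u (mzero C C' X)" .
  then have "k = mzero C C' X" using mono C' k(1) pa_zero[OF pa C' X] by (meson)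
  then have wp0: "cmp C w \<phi> = mzero C (shO C C') (shO C X)" using k(2) func_zero[OF pa pa tr_shF[OF C] C' X] by simp
  have "w = cmp C w (cmp C \<phi> \<psi>)" using pp cat_idr[OF cat h(3)] by simp
  also have "\<dots> = cmp C (cmp C w \<phi>) \<psi>" using cat_assoc[OF cat psi phi1 h(3)] .
  also have "\<dots> = mzero C W (shO C X)" using wp0 zero_cmp[OF pa psi SX] by simp
  finally show ?thesis .
qed

lemma split_mono_of_zero: assumes C: "triangulated C" and d: "(X,Y,W,u,v,w) \<in> distT C"
  and w0: "w = mzero C W (shO C X)"
  shows "\<exists>r\<in>Hom C Y X. cmp C r u = idm C X"
proof -
  have pa: "preadditive C" using tr_pa[OF C] .
  have cat: "category C" using pa_cat[OF pa] .
  obtain Z where Z: "is_zero_obj C Z" using tr_zobj[OF C] by blast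
  have Zo: "Z \<in> Ob C" using zobj_ob[OF Z] .
  have h: "u \<in> Hom C X Y" "v \<in> Hom C Y W" "w \<in> Hom C W (shO C X)" using tri_homs[OF C d] by auto
  have X: "X \<in> Ob C" and Y: "Y \<in> Ob C" and Wo: "W \<in> Ob C" using cat_hom_ob[OF cat h(1)] cat_hom_ob[OF cat h(2)] by auto
  have SX: "shO C X \<in> Ob C" and SY: "shO C Y \<in> Ob C" using sh_ob[OF C X] sh_ob[OF C Y] by auto
  have r2: "(W, shO C X, shO C Y, w, mneg C (shM C u), mneg C (shM C v)) \<in> distT C"
    using tr_rot[OF C tr_rot[OF C d]] .
  have t2: "(Z, shO C X, shO C X, mzero C Z (shO C X), mneg C (shM C (idm C X)), mneg C (shM C (mzero C X Z))) \<in> distT C"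
    using tr_rot[OF C tr_rot[OF C tr_triv[OF C X Z]]] .
  have a: "mzero C W Z \<in> Hom C W Z" using pa_zero[OF pa Wo Zo] .
  have iX: "idm C (shO C X) \<in> Hom C (shO C X) (shO C X)" using cat_id[OF cat SX] .
  have "cmp C (idm C (shO C X)) w = cmp C (mzero C Z (shO C X)) (mzero C W Z)"
    using cat_idl[OF cat h(3)] w0 zero_cmp[OF pa a SX] by simp
  then obtain c where c: "tri_morph C (W, shO C X, shO C Y, w, mneg C (shM C u), mneg C (shM C v))
     (Z, shO C X, shO C X, mzero C Z (shO C X), mneg C (shM C (idm C X)), mneg C (shM C (mzero C X Z)))
     (mzero C W Z) (idm C (shO C X)) c"
    using tr_TR3[OF C r2 t2 a iX] by blast
  then have c1: "c \<in> Hom C (shO C Y) (shO C X)"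
    and c2: "cmp C c (mneg C (shM C u)) = cmp C (mneg C (shM C (idm C X))) (idm C (shO C X))"
    unfolding tri_morph_def by auto
  have su: "shM C u \<in> Hom C (shO C X) (shO C Y)" using sh_hom[OF C h(1)] .
  have "cmp C (mneg C (shM C (idm C X))) (idm C (shO C X)) = mneg C (idm C (shO C X))"
    using sh_id[OF C X] cat_idr[OF cat pa_neg[OF pa iX]] by simp
  moreover have "cmp C c (mneg C (shM C u)) = mneg C (cmp C c (shM C u))"
    using cmp_neg[OF pa su c1] .
  ultimately have "mneg C (idm C (shO C X)) = mneg C (cmp C c (shM C u))" using c2 by simp
  then have e: "idm C (shO C X) = cmp C c (shM C u)"
    using neg_neg[OF pa iX] neg_neg[OF pa cat_cmp[OF cat su c1]] by metis
  obtain r where r: "r \<in> Hom C Y X" "c = shM C r"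
    using tr_shbij[OF C Y X] c1 unfolding bij_betw_def by blast
  have "shM C (cmp C r u) = shM C (idm C X)"
    using sh_cmp[OF C h(1) r(1)] r(2) e sh_id[OF C X] by simp
  moreover have "cmp C r u \<in> Hom C X X" using cat_cmp[OF cat h(1) r(1)] .
  ultimately have "cmp C r u = idm C X"
    using inj_onD[OF bij_betw_imp_inj_on[OF tr_shbij[OF C X X]] _ _ cat_id[OF cat X]] by blast
  then show ?thesis using r(1) by blast
qed


lemma proj_part:
  assumes S: "triangulated SS" and T: "triangulated TT"
    and adj: "adjunction TT SS So Sm To Tm \<epsilon> \<eta>" and Q: "Q \<in> Ob SS"
  shows "rel_projective SS Tm Q \<longleftrightarrow> split_epi SS (So (To Q)) Q (\<eta> Q)"
proof -
  have pa: "preadditive SS" using tr_pa[OF S] .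
  have cat: "category SS" using pa_cat[OF pa] .
  have Tf: "is_functor SS TT To Tm" and Sf: "is_functor TT SS So Sm"
    and en: "nat_trans SS SS (So \<circ> To) (Sm \<circ> Tm) id id \<eta>"
    and tri: "\<forall>Y\<in>Ob SS. cmp TT (Tm (\<eta> Y)) (\<epsilon> (To Y)) = idm TT (To Y)"
    and un: "nat_trans TT TT id id (To \<circ> So) (Tm \<circ> Sm) \<epsilon>"
    using adj unfolding adjunction_def by auto
  have etaH: "\<And>X. X \<in> Ob SS \<Longrightarrow> \<eta> X \<in> Hom SS (So (To X)) X" using en unfolding nat_trans_def by auto
  have etaN: "\<And>X Y f. f \<in> Hom SS X Y \<Longrightarrow> cmp SS (\<eta> Y) (Sm (Tm f)) = cmp SS f (\<eta> X)"
    using en unfolding nat_trans_def by auto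
  have eQ: "\<eta> Q \<in> Hom SS (So (To Q)) Q" using etaH[OF Q] .
  have TQ: "To Q \<in> Ob TT" using Tf Q unfolding is_functor_def by auto
  have catT: "category TT" using pa_cat[OF tr_pa[OF T]] .
  have epsH: "\<epsilon> (To Q) \<in> Hom TT (To Q) (To (So (To Q)))" using un TQ unfolding nat_trans_def by auto
  have TmH: "\<And>X Y f. f \<in> Hom SS X Y \<Longrightarrow> Tm f \<in> Hom TT (To X) (To Y)" using Tf unfolding is_functor_def by auto
  have TmC: "\<And>X Y Z f g. f \<in> Hom SS X Y \<Longrightarrow> g \<in> Hom SS Y Z \<Longrightarrow> Tm (cmp SS g f) = cmp TT (Tm g) (Tm f)"
    using Tf unfolding is_functor_def by auto
  show ?thesis
  proof
    assume rp: "rel_projective SS Tm Q"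
    have epi: "f = g" if f: "f \<in> Hom SS Q X" and g: "g \<in> Hom SS Q X" and e: "cmp SS f (\<eta> Q) = cmp SS g (\<eta> Q)" for X f g
    proof -
      have X: "X \<in> Ob SS" using cat_hom_ob[OF cat f] by simp
      have "Tm f = cmp TT (Tm f) (cmp TT (Tm (\<eta> Q)) (\<epsilon> (To Q)))" using tri Q cat_idr[OF catT TmH[OF f]] by simp
      also have "\<dots> = cmp TT (Tm (cmp SS f (\<eta> Q))) (\<epsilon> (To Q))"
        using cat_assoc[OF catT epsH TmH[OF eQ] TmH[OF f]] TmC[OF eQ f] by simp
      also have "\<dots> = cmp TT (Tm (cmp SS g (\<eta> Q))) (\<epsilon> (To Q))" using e by simp
      also have "\<dots> = cmp TT (Tm g) (cmp TT (Tm (\<eta> Q)) (\<epsilon> (To Q)))"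
        using cat_assoc[OF catT epsH TmH[OF eQ] TmH[OF g]] TmC[OF eQ g] by simp
      also have "\<dots> = Tm g" using tri Q cat_idr[OF catT TmH[OF g]] by simp
      finally have "Tm f = Tm g" .
      then show ?thesis using rp X f g unfolding rel_projective_def inj_on_def by blast
    qed
    obtain W v w where d: "(So (To Q), Q, W, \<eta> Q, v, w) \<in> distT SS" using tr_TR1[OF S eQ] by blast
    have vH: "v \<in> Hom SS Q W" using tri_homs[OF S d] by auto
    have Wo: "W \<in> Ob SS" using cat_hom_ob[OF cat vH] by simp
    have "cmp SS v (\<eta> Q) = cmp SS (mzero SS Q W) (\<eta> Q)"
      using dist_comp_zero[OF S d] zero_cmp[OF pa eQ Wo] by simp
    then have "v = mzero SS Q W" using epi[OF vH pa_zero[OF pa Q Wo]] by simp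
    then show "split_epi SS (So (To Q)) Q (\<eta> Q)"
      using split_epi_of_zero[OF S d] eQ unfolding split_epi_def by blast
  next
    assume "split_epi SS (So (To Q)) Q (\<eta> Q)"
    then obtain s where s: "s \<in> Hom SS Q (So (To Q))" "cmp SS (\<eta> Q) s = idm SS Q" unfolding split_epi_def by blast
    show "rel_projective SS Tm Q" unfolding rel_projective_def
    proof (intro ballI inj_onI)
      fix X f g assume X: "X \<in> Ob SS" and f: "f \<in> Hom SS Q X" and g: "g \<in> Hom SS Q X" and e: "Tm f = Tm g"
      have fe: "cmp SS f (\<eta> Q) = cmp SS g (\<eta> Q)" using etaN[OF f] etaN[OF g] e by simp
      have "f = cmp SS f (cmp SS (\<eta> Q) s)" using s(2) cat_idr[OF cat f] by simp
      also have "\<dots> = cmp SS (cmp SS g (\<eta> Q)) s" using cat_assoc[OF cat s(1) eQ f] fe by simp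
      also have "\<dots> = g" using cat_assoc[OF cat s(1) eQ g] s(2) cat_idr[OF cat g] by simp
      finally show "f = g" .
    qed
  qed
qed

lemma inj_part:
  assumes S: "triangulated SS" and T: "triangulated TT"
    and adj: "adjunction SS TT To Tm So Sm \<epsilon> \<zeta>" and Q: "Q \<in> Ob SS"
  shows "rel_injective SS Tm Q \<longleftrightarrow> split_mono SS Q (So (To Q)) (\<epsilon> Q)"
proof -
  have pa: "preadditive SS" using tr_pa[OF S] .
  have cat: "category SS" using pa_cat[OF pa] .
  have catT: "category TT" using pa_cat[OF tr_pa[OF T]] .
  have Tf: "is_functor SS TT To Tm" and Sf: "is_functor TT SS So Sm"
    and un: "nat_trans SS SS id id (So \<circ> To) (Sm \<circ> Tm) \<epsilon>"
    and tri: "\<forall>X\<in>Ob SS. cmp TT (\<zeta> (To X)) (Tm (\<epsilon> X)) = idm TT (To X)"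
    and cn: "nat_trans TT TT (To \<circ> So) (Tm \<circ> Sm) id id \<zeta>"
    using adj unfolding adjunction_def by auto
  have epsH: "\<And>X. X \<in> Ob SS \<Longrightarrow> \<epsilon> X \<in> Hom SS X (So (To X))" using un unfolding nat_trans_def by auto
  have epsN: "\<And>X Y f. f \<in> Hom SS X Y \<Longrightarrow> cmp SS (\<epsilon> Y) f = cmp SS (Sm (Tm f)) (\<epsilon> X)"
    using un unfolding nat_trans_def by auto
  have eQ: "\<epsilon> Q \<in> Hom SS Q (So (To Q))" using epsH[OF Q] .
  have TQ: "To Q \<in> Ob TT" using Tf Q unfolding is_functor_def by auto
  have TmH: "\<And>X Y f. f \<in> Hom SS X Y \<Longrightarrow> Tm f \<in> Hom TT (To X) (To Y)" using Tf unfolding is_functor_def by auto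
  have TmC: "\<And>X Y Z f g. f \<in> Hom SS X Y \<Longrightarrow> g \<in> Hom SS Y Z \<Longrightarrow> Tm (cmp SS g f) = cmp TT (Tm g) (Tm f)"
    using Tf unfolding is_functor_def by auto
  have SoO: "So (To Q) \<in> Ob SS" using Sf TQ unfolding is_functor_def by auto
  have zQ: "\<zeta> (To Q) \<in> Hom TT (To (So (To Q))) (To Q)" using cn TQ unfolding nat_trans_def by auto
  show ?thesis
  proof
    assume ri: "rel_injective SS Tm Q"
    have mono: "\<forall>V\<in>Ob SS. \<forall>f\<in>Hom SS V Q. \<forall>g\<in>Hom SS V Q. cmp SS (\<epsilon> Q) f = cmp SS (\<epsilon> Q) g \<longrightarrow> f = g"
    proof (intro ballI impI)
      fix V f g assume V: "V \<in> Ob SS" and f: "f \<in> Hom SS V Q" and g: "g \<in> Hom SS V Q"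
        and e: "cmp SS (\<epsilon> Q) f = cmp SS (\<epsilon> Q) g"
      have "Tm f = cmp TT (cmp TT (\<zeta> (To Q)) (Tm (\<epsilon> Q))) (Tm f)" using tri Q cat_idl[OF catT TmH[OF f]] by simp
      also have "\<dots> = cmp TT (\<zeta> (To Q)) (Tm (cmp SS (\<epsilon> Q) f))"
        using cat_assoc[OF catT TmH[OF f] TmH[OF eQ] zQ] TmC[OF f eQ] by simp
      also have "\<dots> = cmp TT (\<zeta> (To Q)) (Tm (cmp SS (\<epsilon> Q) g))" using e by simp
      also have "\<dots> = cmp TT (cmp TT (\<zeta> (To Q)) (Tm (\<epsilon> Q))) (Tm g)"
        using cat_assoc[OF catT TmH[OF g] TmH[OF eQ] zQ] TmC[OF g eQ] by simp
      also have "\<dots> = Tm g" using tri Q cat_idl[OF catT TmH[OF g]] by simp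
      finally have "Tm f = Tm g" .
      then show "f = g" using ri V f g unfolding rel_injective_def inj_on_def by blast
    qed
    obtain W v w where d: "(Q, So (To Q), W, \<epsilon> Q, v, w) \<in> distT SS" using tr_TR1[OF S eQ] by blast
    have "w = mzero SS W (shO SS Q)" using w_zero_of_mono[OF S d mono] .
    then show "split_mono SS Q (So (To Q)) (\<epsilon> Q)"
      using split_mono_of_zero[OF S d] eQ unfolding split_mono_def by blast
  next
    assume "split_mono SS Q (So (To Q)) (\<epsilon> Q)"
    then obtain r where r: "r \<in> Hom SS (So (To Q)) Q" "cmp SS r (\<epsilon> Q) = idm SS Q" unfolding split_mono_def by blast
    show "rel_injective SS Tm Q" unfolding rel_injective_def
    proof (intro ballI inj_onI)
      fix X f g assume X: "X \<in> Ob SS" and f: "f \<in> Hom SS X Q" and g: "g \<in> Hom SS X Q" and e: "Tm f = Tm g"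
      have fe: "cmp SS (\<epsilon> Q) f = cmp SS (\<epsilon> Q) g" using epsN[OF f] epsN[OF g] e by simp
      have "f = cmp SS (cmp SS r (\<epsilon> Q)) f" using r(2) cat_idl[OF cat f] by simp
      also have "\<dots> = cmp SS r (cmp SS (\<epsilon> Q) g)" using cat_assoc[OF cat f eQ r(1)] fe by simp
      also have "\<dots> = g" using cat_assoc[OF cat g eQ r(1)] r(2) cat_idl[OF cat g] by simp
      finally show "f = g" .
    qed
  qed
qed


theorem corollary2p9:
  fixes SS :: "('a,'b) tricat" and TT :: "('c,'d) tricat"
    and To :: "'a \<Rightarrow> 'c" and Tm :: "'b \<Rightarrow> 'd"
  assumes "triangulated SS" and "triangulated TT"
    and "\<exists>\<phi>. triangle_functor SS TT To Tm \<phi>"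
  shows "(\<forall>(So :: 'c \<Rightarrow> 'a) (Sm :: 'd \<Rightarrow> 'b) (\<eta> :: 'a \<Rightarrow> 'b).
            (\<exists>\<epsilon>. adjunction TT SS So Sm To Tm \<epsilon> \<eta>) \<longrightarrow>
            (\<forall>Q\<in>Ob SS. rel_projective SS Tm Q \<longleftrightarrow> split_epi SS (So (To Q)) Q (\<eta> Q)))
       \<and> (\<forall>(So :: 'c \<Rightarrow> 'a) (Sm :: 'd \<Rightarrow> 'b) (\<epsilon>' :: 'a \<Rightarrow> 'b).
            (\<exists>\<zeta>. adjunction SS TT To Tm So Sm \<epsilon>' \<zeta>) \<longrightarrow>
            (\<forall>Q\<in>Ob SS. rel_injective SS Tm Q \<longleftrightarrow> split_mono SS Q (So (To Q)) (\<epsilon>' Q)))"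
proof -
  show ?thesis using proj_part[OF assms(1) assms(2)] inj_part[OF assms(1) assms(2)] by blast
qed

end
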